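(* Let $m,n\in\mathbb{N}$, let $\lambda_{\ell}>0$ for $1\le\ell\le m$, and let $\phi_{j,\ell}\in(0,\pi/2)$ for $1\le j\le n$, $1\le\ell\le m$. Then the $n\times n$ matrix \[ \left(\frac{1}{\prod_{\ell=1}^{m}\sin^{\lambda_{\ell}}(\phi_{j,\ell}+\phi_{k,\ell})}\right)_{j,k=1}^{n} \] is positive semidefinite.
   Context: A real symmetric (or complex) matrix $A=(a_{j,k})$ is positive semidefinite if $\sum_{j,k}a_{j,k}z_j\overline{z_k}\ge0$ for all complex $z_j$. *)

theory Defs
  imports "HOL-Analysis.Analysis" "HOL-Library.Complex_Order"
begin

text \<open>An n x n real matrix, given as a function on indices 1..n, is positive
  semidefinite if the Hermitian form sum_{j,k} a_{j,k} z_j conj(z_k) is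
  nonnegative (in the complex order, i.e. real and >= 0) for all complex z.\<close>
definition psd_matrix :: "nat \<Rightarrow> (nat \<Rightarrow> nat \<Rightarrow> real) \<Rightarrow> bool" where
  "psd_matrix n A \<longleftrightarrow>
     (\<forall>z :: nat \<Rightarrow> complex.
        (\<Sum>j=1..n. \<Sum>k=1..n. complex_of_real (A j k) * z j * cnj (z k)) \<ge> 0)"

end

theory Submission
  imports Defs "HOL-Analysis.Generalised_Binomial_Theorem"
begin

lemma psd_cong:
  assumes "psd_matrix n A" "\<And>j k. j \<in> {1..n} \<Longrightarrow> k \<in> {1..n} \<Longrightarrow> A j k = B j k"
  shows "psd_matrix n B"
  unfolding psd_matrix_def
proof
  fix z :: "nat \<Rightarrow> complex"
  have "(\<Sum>j=1..n. \<Sum>k=1..n. complex_of_real (B j k) * z j * cnj (z k))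
      = (\<Sum>j=1..n. \<Sum>k=1..n. complex_of_real (A j k) * z j * cnj (z k))"
    using assms(2) by (intro sum.cong refl) auto
  moreover have "(\<Sum>j=1..n. \<Sum>k=1..n. complex_of_real (A j k) * z j * cnj (z k)) \<ge> 0"
    using assms(1) unfolding psd_matrix_def by (rule spec)
  ultimately show "(\<Sum>j=1..n. \<Sum>k=1..n. complex_of_real (B j k) * z j * cnj (z k)) \<ge> 0" by simp
qed

lemma sums_nonneg_complex:
  fixes s :: "nat \<Rightarrow> complex"
  assumes "s sums L" "\<And>i. s i \<ge> 0"
  shows "L \<ge> 0"
proof -
  have r: "(\<lambda>i. Re (s i)) sums Re L" and im: "(\<lambda>i. Im (s i)) sums Im L"
    using assms(1) sums_complex_iff by auto
  have h1: "\<And>i. Re (s i) \<ge> 0" and h2: "\<And>i. Im (s i) = 0" using assms(2) by (auto simp: less_eq_complex_def)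
  have "Re L \<ge> 0"
    by (rule sums_le[OF _ sums_zero r]) (simp add: h1)
  moreover have "(\<lambda>i. 0) sums Im L" using im by (simp add: h2)
  hence "Im L = 0" using sums_zero sums_unique2 by blast
  ultimately have "Re L \<ge> 0 \<and> Im L = 0" by simp
  thus ?thesis by (simp add: less_eq_complex_def)
qed

lemma psd_series_mult:
  assumes A: "psd_matrix n A" and c: "\<And>i. c i \<ge> (0::real)"
    and S: "\<And>j k. j \<in> {1..n} \<Longrightarrow> k \<in> {1..n} \<Longrightarrow> (\<lambda>i. c i * u i j * u i k) sums F j k"
  shows "psd_matrix n (\<lambda>j k. A j k * F j k)"
  unfolding psd_matrix_def
proof
  fix z :: "nat \<Rightarrow> complex"
  define w where "w i j = complex_of_real (u i j) * z j" for i j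
  define Q where "Q i = (\<Sum>j=1..n. \<Sum>k=1..n. complex_of_real (A j k) * w i j * cnj (w i k))" for i
  have Q0: "Q i \<ge> 0" for i unfolding Q_def using A unfolding psd_matrix_def by (rule spec)
  have "(\<lambda>i. \<Sum>j=1..n. \<Sum>k=1..n. complex_of_real (c i * u i j * u i k) * (complex_of_real (A j k) * z j * cnj (z k)))
        sums (\<Sum>j=1..n. \<Sum>k=1..n. complex_of_real (F j k) * (complex_of_real (A j k) * z j * cnj (z k)))"
    by (intro sums_sum sums_mult2 sums_of_real S) auto
  moreover have "(\<Sum>j=1..n. \<Sum>k=1..n. complex_of_real (c i * u i j * u i k) * (complex_of_real (A j k) * z j * cnj (z k)))
      = complex_of_real (c i) * Q i" for i
    unfolding Q_def w_def by (simp add: sum_distrib_left mult_ac)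
  moreover have "(\<Sum>j=1..n. \<Sum>k=1..n. complex_of_real (F j k) * (complex_of_real (A j k) * z j * cnj (z k)))
      = (\<Sum>j=1..n. \<Sum>k=1..n. complex_of_real (A j k * F j k) * z j * cnj (z k))"
    by (simp add: mult_ac)
  ultimately have "(\<lambda>i. complex_of_real (c i) * Q i) sums (\<Sum>j=1..n. \<Sum>k=1..n. complex_of_real (A j k * F j k) * z j * cnj (z k))"
    by simp
  moreover have "complex_of_real (c i) * Q i \<ge> 0" for i
    using c[of i] Q0[of i] by (auto simp: less_eq_complex_def)
  ultimately show "(\<Sum>j=1..n. \<Sum>k=1..n. complex_of_real (A j k * F j k) * z j * cnj (z k)) \<ge> 0"
    by (rule sums_nonneg_complex)
qed

lemma psd_ones: "psd_matrix n (\<lambda>j k. 1)"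
  unfolding psd_matrix_def
proof
  fix z :: "nat \<Rightarrow> complex"
  have "(\<Sum>j=1..n. \<Sum>k=1..n. complex_of_real 1 * z j * cnj (z k)) = (\<Sum>j=1..n. z j) * cnj (\<Sum>j=1..n. z j)"
    apply (simp add: sum_distrib_right sum_distrib_left)
    by (rule sum.swap)
  also have "\<dots> \<ge> 0"
  proof -
    have "w * cnj w \<ge> 0" for w :: complex by (simp add: complex_mult_cnj less_eq_complex_def)
    thus ?thesis .
  qed
  finally show "(\<Sum>j=1..n. \<Sum>k=1..n. complex_of_real 1 * z j * cnj (z k)) \<ge> 0" .
qed

definition CC :: "real \<Rightarrow> nat \<Rightarrow> real" where "CC lam i = ((-lam) gchoose i) * (-1)^i"
definition UU :: "real \<Rightarrow> nat \<Rightarrow> real \<Rightarrow> real" where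
  "UU lam i x = cos (pi/4 - x) powr (-lam) * (sin (pi/4 - x) / cos (pi/4 - x))^i"

lemma CC_nonneg: "lam > 0 \<Longrightarrow> CC lam i \<ge> 0"
proof -
  assume l: "lam > 0"
  have "CC lam i = (lam + of_nat i - 1) gchoose i"
    unfolding CC_def gbinomial_minus by (simp flip: power_mult_distrib)
  also have "\<dots> = pochhammer lam i / fact i" by (simp add: gbinomial_pochhammer')
  also have "\<dots> \<ge> 0" using l by (intro divide_nonneg_pos pochhammer_pos less_imp_le) auto
  finally show ?thesis .
qed

lemma angle_facts:
  assumes "x \<in> {0<..<pi/2}"
  shows "cos (pi/4 - x) > 0" "(sin (pi/4 - x))^2 < (cos (pi/4 - x))^2"
proof -
  show "cos (pi/4 - x) > 0" using assms by (intro cos_gt_zero_pi) auto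
  have "cos (2*(pi/4 - x)) > 0" using assms by (intro cos_gt_zero_pi) auto
  moreover have "cos (2*(pi/4 - x)) = (cos (pi/4 - x))^2 - (sin (pi/4 - x))^2" by (rule cos_double)
  ultimately show "(sin (pi/4 - x))^2 < (cos (pi/4 - x))^2" by (simp add: cos_double)
qed

lemma kernel_series:
  assumes lam: "lam > 0" and x: "x \<in> {0<..<pi/2}" and y: "y \<in> {0<..<pi/2}"
  shows "(\<lambda>i. CC lam i * UU lam i x * UU lam i y) sums (1 / sin (x + y) powr lam)"
proof -
  define a where "a = pi/4 - x"
  define b where "b = pi/4 - y"
  have ca: "cos a > 0" and sa: "(sin a)^2 < (cos a)^2" using angle_facts[OF x] a_def by auto
  have cb: "cos b > 0" and sb: "(sin b)^2 < (cos b)^2" using angle_facts[OF y] b_def by auto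
  define p where "p = (sin a / cos a) * (sin b / cos b)"
  have "p^2 = ((sin a)^2 / (cos a)^2) * ((sin b)^2/(cos b)^2)" by (simp add: p_def power_mult_distrib power_divide)
  also have "\<dots> < 1 * 1"
    using ca cb sa sb by (intro mult_strict_mono) (auto simp: divide_less_eq)
  finally have p1: "\<bar>-p\<bar> < 1" by (simp add: abs_square_less_1)
  have sxy: "sin (x + y) = cos a * cos b * (1 - p)"
  proof -
    have "x + y = pi/2 - (a + b)" by (simp add: a_def b_def)
    hence "sin (x+y) = cos (a + b)" by (simp add: sin_cos_eq)
    also have "\<dots> = cos a * cos b * (1 - p)" using ca cb by (simp add: cos_add p_def field_simps)
    finally show ?thesis .
  qed
  have pp: "1 - p > 0" using p1 by auto
  have "1 / sin (x + y) powr lam = cos a powr (-lam) * cos b powr (-lam) * (1 + -p) powr (-lam)"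
    using ca cb pp by (simp add: sxy powr_mult powr_minus divide_simps)
  moreover have "(\<lambda>i. cos a powr (-lam) * cos b powr (-lam) * (((-lam) gchoose i) * (-p)^i)) sums
      (cos a powr (-lam) * cos b powr (-lam) * (1 + -p) powr (-lam))"
    by (intro sums_mult gen_binomial_real p1)
  moreover have "cos a powr (-lam) * cos b powr (-lam) * (((-lam) gchoose i) * (-p)^i)
      = CC lam i * UU lam i x * UU lam i y" for i
  proof -
    have "(-p)^i = ((-1) * ((sin a / cos a) * (sin b / cos b)))^i"
      unfolding p_def by simp
    also have "\<dots> = (-1)^i * ((sin a / cos a)^i * (sin b / cos b)^i)"
      by (simp only: power_mult_distrib)
    finally have eq: "(-p)^i = (-1)^i * ((sin a / cos a)^i * (sin b / cos b)^i)" .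
    show ?thesis unfolding CC_def UU_def a_def[symmetric] b_def[symmetric] eq by (simp only: mult_ac)
  qed
  ultimately show ?thesis by simp
qed

lemma main_aux:
  fixes m n :: nat and lam :: "nat \<Rightarrow> real" and phi :: "nat \<Rightarrow> nat \<Rightarrow> real"
  assumes lam_pos: "\<And>l. 1 \<le> l \<Longrightarrow> l \<le> m \<Longrightarrow> lam l > 0"
    and phi_range: "\<And>j l. 1 \<le> j \<Longrightarrow> j \<le> n \<Longrightarrow> 1 \<le> l \<Longrightarrow> l \<le> m \<Longrightarrow>
                       phi j l \<in> {0<..<pi/2}"
  shows "M \<le> m \<Longrightarrow> psd_matrix n (\<lambda>j k. 1 / (\<Prod>l=1..M. sin (phi j l + phi k l) powr lam l))"
proof (induction M)
  case 0
  then show ?case using psd_ones by simp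
next
  case (Suc M)
  have IH: "psd_matrix n (\<lambda>j k. 1 / (\<Prod>l=1..M. sin (phi j l + phi k l) powr lam l))"
    using Suc by simp
  have "psd_matrix n (\<lambda>j k. (1 / (\<Prod>l=1..M. sin (phi j l + phi k l) powr lam l)) *
          (1 / sin (phi j (Suc M) + phi k (Suc M)) powr lam (Suc M)))"
  proof (rule psd_series_mult[OF IH])
    show "\<And>i. CC (lam (Suc M)) i \<ge> 0" using Suc.prems by (intro CC_nonneg lam_pos) auto
    show "(\<lambda>i. CC (lam (Suc M)) i * UU (lam (Suc M)) i (phi j (Suc M)) * UU (lam (Suc M)) i (phi k (Suc M)))
        sums (1 / sin (phi j (Suc M) + phi k (Suc M)) powr lam (Suc M))"
      if "j \<in> {1..n}" "k \<in> {1..n}" for j k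
      using Suc.prems that by (intro kernel_series lam_pos phi_range) auto
  qed
  thus ?case by (rule psd_cong) auto
qed

theorem mainTheorem5:
  fixes m n :: nat
    and lam :: "nat \<Rightarrow> real"
    and phi :: "nat \<Rightarrow> nat \<Rightarrow> real"
  assumes lam_pos: "\<And>l. 1 \<le> l \<Longrightarrow> l \<le> m \<Longrightarrow> lam l > 0"
    and phi_range: "\<And>j l. 1 \<le> j \<Longrightarrow> j \<le> n \<Longrightarrow> 1 \<le> l \<Longrightarrow> l \<le> m \<Longrightarrow>
                       phi j l \<in> {0<..<pi/2}"
  shows "psd_matrix n
           (\<lambda>j k. 1 / (\<Prod>l=1..m. sin (phi j l + phi k l) powr lam l))"
  using main_aux[OF assms] by simp

end
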